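(* Let $(M^{2n},J)$ be an almost complex manifold of real dimension $2n$ and $o\in M$. Let $(U,z)$, $z=(z^1,\dots,z^n)$, be a local complex coordinate around $o$ (i.e. the real and imaginary parts of $z^1,\dots,z^n$ form a smooth chart on $U$, not necessarily compatible with $J$) such that $\frac{\partial}{\partial z^i}\big|_o\in T^{1,0}_oM$ for $i=1,\dots,n$. Let $f$ be a holomorphic function on $U$ such that $\frac{\partial^{|\alpha|}f}{\partial z^\alpha}(o)=0$ for every multi-index $\alpha$ with $|\alpha|\le m$. Then $\mathrm{ord}_o(f)\ge m+1$.
   Context: $T^{1,0}_oM$ is the $\sqrt{-1}$-eigenspace of $J$ on $T_oM\otimes\mathbb C$. A complex function $f$ is holomorphic if $\bar\partial f=(df)^{0,1}=0$, i.e. $df$ vanishes on the $(-\sqrt{-1})$-eigenspace $T^{0,1}$ of $J$. $\mathrm{ord}_o(f)$ is the vanishing order of $f$ at $o$: the largest $k$ such that all partial derivatives of $f$ (in any smooth chart) of order $<k$ vanish at $o$. *)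

theory Defs
  imports "HOL-Analysis.Analysis" "HOL-Library.Extended_Nat"
begin

text \<open>Local model: the chart (U, z) identifies a neighbourhood of o with an open set
U of complex^'n, viewed as a real vector space of dimension 2n (real coordinates
x^k = Re z^k, y^k = Im z^k).  Tangent vectors are elements of complex^'n (as a real
vector space); the real coordinate vector fields d/dx^k, d/dy^k are axis k 1 and axis k i.\<close>

text \<open>Iterated directional derivatives (directions applied innermost = last).\<close>
fun Dl :: "('a::real_normed_vector) list \<Rightarrow> ('a \<Rightarrow> 'b::real_normed_vector) \<Rightarrow> 'a \<Rightarrow> 'b" where
  "Dl [] g = g"
| "Dl (v # vs) g = (\<lambda>p. frechet_derivative (Dl vs g) (at p) v)"

definition smooth_on :: "'a::real_normed_vector set \<Rightarrow> ('a \<Rightarrow> 'b::real_normed_vector) \<Rightarrow> bool" where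
  "smooth_on U g \<longleftrightarrow> (\<forall>vs. \<forall>p\<in>U. Dl vs g differentiable (at p))"

definition almost_complex_on :: "('a::real_normed_vector) set \<Rightarrow> ('a \<Rightarrow> 'a \<Rightarrow> 'a) \<Rightarrow> bool" where
  "almost_complex_on U J \<longleftrightarrow>
     (\<forall>p\<in>U. linear (J p) \<and> (\<forall>v. J p (J p v) = - v)) \<and> (\<forall>v. smooth_on U (\<lambda>p. J p v))"

text \<open>Complexified tangent vectors: a pair (u,w) stands for u + i w.\<close>
definition cJ :: "('a \<Rightarrow> 'a \<Rightarrow> 'a) \<Rightarrow> 'a \<Rightarrow> 'a \<times> 'a \<Rightarrow> 'a \<times> 'a" where
  "cJ J p uw = (J p (fst uw), J p (snd uw))"

definition cmult_i :: "('a::ab_group_add) \<times> 'a \<Rightarrow> 'a \<times> 'a" where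
  "cmult_i uw = (- snd uw, fst uw)"

definition T10 :: "('a::ab_group_add \<Rightarrow> 'a \<Rightarrow> 'a) \<Rightarrow> 'a \<Rightarrow> ('a \<times> 'a) set" where
  "T10 J p = {uw. cJ J p uw = cmult_i uw}"

definition T01 :: "('a::ab_group_add \<Rightarrow> 'a \<Rightarrow> 'a) \<Rightarrow> 'a \<Rightarrow> ('a \<times> 'a) set" where
  "T01 J p = {uw. cJ J p uw = - cmult_i uw}"

definition cdiff :: "('a::real_normed_vector \<Rightarrow> complex) \<Rightarrow> 'a \<Rightarrow> 'a \<times> 'a \<Rightarrow> complex" where
  "cdiff f p uw = frechet_derivative f (at p) (fst uw) + \<i> * frechet_derivative f (at p) (snd uw)"

definition J_holomorphic_on ::
  "('a::real_normed_vector) set \<Rightarrow> ('a \<Rightarrow> 'a \<Rightarrow> 'a) \<Rightarrow> ('a \<Rightarrow> complex) \<Rightarrow> bool" where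
  "J_holomorphic_on U J f \<longleftrightarrow> smooth_on U f \<and> (\<forall>p\<in>U. \<forall>uw\<in>T01 J p. cdiff f p uw = 0)"

text \<open>Coordinate vector d/dz^k = 1/2 (d/dx^k - i d/dy^k), as a complexified vector.\<close>
definition dz_vec :: "'n::finite \<Rightarrow> (complex^'n) \<times> (complex^'n)" where
  "dz_vec k = ((1/2) *\<^sub>R axis k 1, - ((1/2) *\<^sub>R axis k \<i>))"

definition dz :: "'n::finite \<Rightarrow> (complex^'n \<Rightarrow> complex) \<Rightarrow> complex^'n \<Rightarrow> complex" where
  "dz k g = (\<lambda>p. cdiff g p (dz_vec k))"

definition dz_multi :: "('n::{finite,linorder} \<Rightarrow> nat) \<Rightarrow> ((complex, 'n) vec \<Rightarrow> complex) \<Rightarrow> (complex, 'n) vec \<Rightarrow> complex" where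
  "dz_multi \<alpha> g = foldr (\<lambda>k h. (dz k ^^ \<alpha> k) h) (sorted_list_of_set UNIV) g"

definition multi_deg :: "('n::finite \<Rightarrow> nat) \<Rightarrow> nat" where
  "multi_deg \<alpha> = (\<Sum>k\<in>UNIV. \<alpha> k)"

definition real_coord_dirs :: "(complex^('n::finite)) set" where
  "real_coord_dirs = {axis k 1 | k. True} \<union> {axis k \<i> | k. True}"

definition vanishes_to_order :: "(complex^('n::finite) \<Rightarrow> complex) \<Rightarrow> complex^'n \<Rightarrow> nat \<Rightarrow> bool" where
  "vanishes_to_order f x0 k \<longleftrightarrow>
     (\<forall>vs. set vs \<subseteq> real_coord_dirs \<and> length vs < k \<longrightarrow> Dl vs f x0 = 0)"

definition ord_at :: "(complex^('n::finite) \<Rightarrow> complex) \<Rightarrow> complex^'n \<Rightarrow> enat" where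
  "ord_at f x0 = (SUP k\<in>{k. vanishes_to_order f x0 k}. enat k)"

end

theory Submission
  imports Defs
begin

lemma norm3: "norm (a - b - c) \<le> norm a + norm b + norm c"
  for a b c :: "'a::real_normed_vector"
  by (smt (verit) norm_triangle_ineq4)

lemma schwarz_half:
  fixes g :: "'a::real_normed_vector \<Rightarrow> 'b::real_normed_vector"
  assumes U: "open U" "p \<in> U"
    and gd: "\<And>q. q \<in> U \<Longrightarrow> g differentiable at q"
    and hd: "(\<lambda>q. frechet_derivative g (at q) u) differentiable at p"
    and e: "e > 0"
  shows "\<exists>d>0. \<forall>t. 0 < t \<and> t < d \<longrightarrow>
     norm (g (p + t *\<^sub>R u + t *\<^sub>R w) - g (p + t *\<^sub>R u) - g (p + t *\<^sub>R w) + g p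
           - (t * t) *\<^sub>R frechet_derivative (\<lambda>q. frechet_derivative g (at q) u) (at p) w) \<le> e * (t * t)"
proof -
  define h where "h = (\<lambda>q. frechet_derivative g (at q) u)"
  define H where "H = frechet_derivative h (at p)"
  define A where "A = H w"
  define K where "K = norm u + norm w + 1"
  have K: "K > 0" unfolding K_def by (simp add: add_nonneg_pos)
  have hH: "(h has_derivative H) (at p)" unfolding H_def h_def using hd frechet_derivative_works by blast
  then have blH: "bounded_linear H" by (simp add: has_derivative_at_alt)
  define e' where "e' = e / (4 * K)"
  have e': "e' > 0" unfolding e'_def using e K by simp
  obtain d1 where d1: "d1 > 0" "\<And>y. norm (y - p) < d1 \<Longrightarrow> norm (h y - h p - H (y - p)) \<le> e' * norm (y - p)"
    using hH e' unfolding has_derivative_at_alt by meson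
  obtain r where r: "r > 0" "ball p r \<subseteq> U" using U openE by blast
  define d where "d = min d1 r / K"
  have d: "d > 0" unfolding d_def using d1 r K by simp
  have err: "norm (h (p + k) - h p - H k) \<le> e' * norm k" if "norm k < d1" for k
    using d1(2)[of "p + k"] that by simp
  show ?thesis
  proof (intro exI[of _ d] conjI allI impI d)
    fix t :: real assume t: "0 < t \<and> t < d"
    have tK: "t * K < min d1 r" using t K unfolding d_def by (simp add: pos_less_divide_eq)
    have nk: "norm (s *\<^sub>R u + t *\<^sub>R w) \<le> t * K" "norm (s *\<^sub>R u) \<le> t * K" "norm (t *\<^sub>R w) \<le> t * K"
      if "s \<in> {0..t}" for s
    proof -
      have "norm (s *\<^sub>R u + t *\<^sub>R w) \<le> norm (s *\<^sub>R u) + norm (t *\<^sub>R w)"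
        by (rule norm_triangle_ineq)
      also have "\<dots> = s * norm u + t * norm w" using that t by simp
      also have "\<dots> \<le> t * K" using that t mult_right_mono[of s t "norm u"] unfolding K_def
        by (auto simp: algebra_simps)
      finally show "norm (s *\<^sub>R u + t *\<^sub>R w) \<le> t * K" .
      have "norm (s *\<^sub>R u) \<le> t * norm u" using that mult_right_mono[of s t "norm u"] by simp
      moreover have "t * norm u \<le> t * K" using t unfolding K_def by (intro mult_left_mono) auto
      ultimately show "norm (s *\<^sub>R u) \<le> t * K" by linarith
      show "norm (t *\<^sub>R w) \<le> t * K" using t unfolding K_def by (simp add: mult_left_mono)
    qed
    define f where "f = (\<lambda>s. g (p + s *\<^sub>R u + t *\<^sub>R w) - g (p + s *\<^sub>R u))"
    define f' where "f' = (\<lambda>s. h (p + s *\<^sub>R u + t *\<^sub>R w) - h (p + s *\<^sub>R u))"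
    have inU: "p + k \<in> U" if "norm k \<le> t * K" for k
      using that tK r by (intro subsetD[OF r(2)]) (auto simp: dist_norm)
    have fd: "(f has_vector_derivative f' s) (at s within {0..t})" if s: "s \<in> {0..t}" for s
    proof -
      have gq: "\<And>q. q \<in> U \<Longrightarrow> (g has_derivative frechet_derivative g (at q)) (at q)"
        using gd frechet_derivative_works by blast
      have 1: "p + s *\<^sub>R u + t *\<^sub>R w \<in> U" using inU[OF nk(1)[OF s]] by (simp add: add.assoc)
      have 2: "p + s *\<^sub>R u \<in> U" using inU[OF nk(2)[OF s]] by simp
      have l1: "((\<lambda>s. p + s *\<^sub>R u + t *\<^sub>R w) has_derivative (\<lambda>x. x *\<^sub>R u)) (at s within {0..t})"
        by (auto intro!: derivative_eq_intros)
      have l2: "((\<lambda>s. p + s *\<^sub>R u) has_derivative (\<lambda>x. x *\<^sub>R u)) (at s within {0..t})"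
        by (auto intro!: derivative_eq_intros)
      have c1: "((\<lambda>s. g (p + s *\<^sub>R u + t *\<^sub>R w)) has_derivative (\<lambda>x. frechet_derivative g (at (p + s *\<^sub>R u + t *\<^sub>R w)) (x *\<^sub>R u))) (at s within {0..t})"
        using diff_chain_within[OF l1 has_derivative_at_withinI[OF gq[OF 1]]] by (simp add: o_def)
      have c2: "((\<lambda>s. g (p + s *\<^sub>R u)) has_derivative (\<lambda>x. frechet_derivative g (at (p + s *\<^sub>R u)) (x *\<^sub>R u))) (at s within {0..t})"
        using diff_chain_within[OF l2 has_derivative_at_withinI[OF gq[OF 2]]] by (simp add: o_def)
      have lin1: "linear (frechet_derivative g (at (p + s *\<^sub>R u + t *\<^sub>R w)))"
        using gq[OF 1] has_derivative_linear by blast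
      have lin2: "linear (frechet_derivative g (at (p + s *\<^sub>R u)))"
        using gq[OF 2] has_derivative_linear by blast
      have "((\<lambda>s. g (p + s *\<^sub>R u + t *\<^sub>R w) - g (p + s *\<^sub>R u)) has_derivative
          (\<lambda>x. frechet_derivative g (at (p + s *\<^sub>R u + t *\<^sub>R w)) (x *\<^sub>R u) - frechet_derivative g (at (p + s *\<^sub>R u)) (x *\<^sub>R u))) (at s within {0..t})"
        by (rule has_derivative_diff[OF c1 c2])
      then show ?thesis unfolding has_vector_derivative_def f_def f'_def h_def
        using linear_scale[OF lin1] linear_scale[OF lin2] by (simp add: scaleR_diff_right)
    qed
    have Bnd: "norm (f' s - f' 0) \<le> 3 * e' * (t * K)" if s: "s \<in> {0..t}" for s
    proof -
      have ltd: "t * K < d1" using tK by simp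
      have E1: "norm (h (p + (s *\<^sub>R u + t *\<^sub>R w)) - h p - H (s *\<^sub>R u + t *\<^sub>R w)) \<le> e' * (t * K)"
        using err[of "s *\<^sub>R u + t *\<^sub>R w"] nk(1)[OF s] ltd e'
        by (smt (verit, best) mult_left_mono)
      have E2: "norm (h (p + s *\<^sub>R u) - h p - H (s *\<^sub>R u)) \<le> e' * (t * K)"
        using err[of "s *\<^sub>R u"] nk(2)[OF s] ltd e'
        by (smt (verit, best) mult_left_mono)
      have E3: "norm (h (p + t *\<^sub>R w) - h p - H (t *\<^sub>R w)) \<le> e' * (t * K)"
        using err[of "t *\<^sub>R w"] nk(3)[OF s] ltd e'
        by (smt (verit, best) mult_left_mono)
      have "f' s - f' 0 = (h (p + (s *\<^sub>R u + t *\<^sub>R w)) - h p - H (s *\<^sub>R u + t *\<^sub>R w))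
           - (h (p + s *\<^sub>R u) - h p - H (s *\<^sub>R u)) - (h (p + t *\<^sub>R w) - h p - H (t *\<^sub>R w))"
        unfolding f'_def using linear_add[OF bounded_linear.linear[OF blH]]
        by (simp add: algebra_simps)
      also have "norm \<dots> \<le> norm (h (p + (s *\<^sub>R u + t *\<^sub>R w)) - h p - H (s *\<^sub>R u + t *\<^sub>R w))
           + norm (h (p + s *\<^sub>R u) - h p - H (s *\<^sub>R u)) + norm (h (p + t *\<^sub>R w) - h p - H (t *\<^sub>R w))"
        by (rule norm3)
      also have "\<dots> \<le> 3 * e' * (t * K)" using E1 E2 E3 by linarith
      finally show ?thesis .
    qed
    have MVb: "norm (f t - f 0 - (t - 0) *\<^sub>R f' 0) \<le> norm (t - 0) * (3 * e' * (t * K))"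
      by (rule vector_differentiable_bound_linearization[OF fd _ Bnd]) (use t in \<open>auto simp: closed_segment_eq_real_ivl\<close>)
    have F0: "norm (f' 0 - t *\<^sub>R A) \<le> e' * (t * K)"
    proof -
      have "f' 0 - t *\<^sub>R A = h (p + t *\<^sub>R w) - h p - H (t *\<^sub>R w)"
        unfolding f'_def A_def using linear_scale[OF bounded_linear.linear[OF blH]] by simp
      also have "norm \<dots> \<le> e' * (t * K)"
        using err[of "t *\<^sub>R w"] nk(3)[of t] tK e' t
        by (smt (verit, best) atLeastAtMost_iff min_less_iff_conj mult_left_mono)
      finally show ?thesis .
    qed
    have eq: "g (p + t *\<^sub>R u + t *\<^sub>R w) - g (p + t *\<^sub>R u) - g (p + t *\<^sub>R w) + g p - (t * t) *\<^sub>R A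
        = (f t - f 0 - (t - 0) *\<^sub>R f' 0) + t *\<^sub>R (f' 0 - t *\<^sub>R A)"
      unfolding f_def by (simp add: algebra_simps)
    have "norm (g (p + t *\<^sub>R u + t *\<^sub>R w) - g (p + t *\<^sub>R u) - g (p + t *\<^sub>R w) + g p - (t * t) *\<^sub>R A)
        \<le> norm (f t - f 0 - (t - 0) *\<^sub>R f' 0) + t * norm (f' 0 - t *\<^sub>R A)"
      unfolding eq using t by (metis norm_triangle_ineq norm_scaleR abs_of_pos)
    also have "\<dots> \<le> t * (3 * e' * (t * K)) + t * (e' * (t * K))"
      using MVb F0 t by (intro add_mono) auto
    also have "\<dots> = e * (t * t)" unfolding e'_def using K by (simp add: field_simps)
    finally show "norm (g (p + t *\<^sub>R u + t *\<^sub>R w) - g (p + t *\<^sub>R u) - g (p + t *\<^sub>R w) + g p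
           - (t * t) *\<^sub>R frechet_derivative (\<lambda>q. frechet_derivative g (at q) u) (at p) w) \<le> e * (t * t)"
      unfolding A_def H_def h_def .
  qed
qed

lemma schwarz:
  fixes g :: "'a::real_normed_vector \<Rightarrow> 'b::real_normed_vector"
  assumes U: "open U" "p \<in> U"
    and gd: "\<And>q. q \<in> U \<Longrightarrow> g differentiable at q"
    and hu: "(\<lambda>q. frechet_derivative g (at q) u) differentiable at p"
    and hw: "(\<lambda>q. frechet_derivative g (at q) w) differentiable at p"
  shows "frechet_derivative (\<lambda>q. frechet_derivative g (at q) u) (at p) w
       = frechet_derivative (\<lambda>q. frechet_derivative g (at q) w) (at p) u"
proof (rule ccontr)
  define A where "A = frechet_derivative (\<lambda>q. frechet_derivative g (at q) u) (at p) w"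
  define B where "B = frechet_derivative (\<lambda>q. frechet_derivative g (at q) w) (at p) u"
  assume "\<not> ?thesis"
  then have ne: "norm (A - B) > 0" unfolding A_def B_def by simp
  define e where "e = norm (A - B) / 4"
  have e: "e > 0" unfolding e_def using ne by simp
  obtain d1 where d1: "d1 > 0" "\<And>t. 0 < t \<and> t < d1 \<Longrightarrow>
     norm (g (p + t *\<^sub>R u + t *\<^sub>R w) - g (p + t *\<^sub>R u) - g (p + t *\<^sub>R w) + g p - (t * t) *\<^sub>R A) \<le> e * (t * t)"
    using schwarz_half[OF U gd hu e, of w] unfolding A_def by blast
  obtain d2 where d2: "d2 > 0" "\<And>t. 0 < t \<and> t < d2 \<Longrightarrow>
     norm (g (p + t *\<^sub>R w + t *\<^sub>R u) - g (p + t *\<^sub>R w) - g (p + t *\<^sub>R u) + g p - (t * t) *\<^sub>R B) \<le> e * (t * t)"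
    using schwarz_half[OF U gd hw e, of u] unfolding B_def by blast
  define t where "t = min d1 d2 / 2"
  have t: "0 < t" "t < d1" "t < d2" unfolding t_def using d1 d2 by auto
  define X where "X = g (p + t *\<^sub>R u + t *\<^sub>R w) - g (p + t *\<^sub>R u) - g (p + t *\<^sub>R w) + g p"
  have X2: "X = g (p + t *\<^sub>R w + t *\<^sub>R u) - g (p + t *\<^sub>R w) - g (p + t *\<^sub>R u) + g p"
    unfolding X_def by (simp add: algebra_simps)
  have 1: "norm (X - (t * t) *\<^sub>R A) \<le> e * (t * t)" using d1(2)[of t] t unfolding X_def by simp
  have 2: "norm (X - (t * t) *\<^sub>R B) \<le> e * (t * t)" using d2(2)[of t] t unfolding X2 by simp
  have "(t * t) * norm (A - B) = norm ((t * t) *\<^sub>R (A - B))" using t by simp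
  also have "(t * t) *\<^sub>R (A - B) = (X - (t * t) *\<^sub>R B) - (X - (t * t) *\<^sub>R A)"
    by (simp add: algebra_simps)
  also have "norm \<dots> \<le> norm (X - (t * t) *\<^sub>R B) + norm (X - (t * t) *\<^sub>R A)"
    by (rule norm_triangle_ineq4)
  also have "\<dots> \<le> 2 * e * (t * t)" using 1 2 by linarith
  finally have "(t * t) * norm (A - B) \<le> (t * t) * (norm (A - B) / 2)" unfolding e_def by simp
  then have "norm (A - B) \<le> norm (A - B) / 2" using t by (simp add: mult_le_cancel_left_pos)
  then show False using ne by simp
qed


lemma FD_local:
  assumes "open U" "p \<in> U" "\<And>q. q \<in> U \<Longrightarrow> f q = g q"
  shows "frechet_derivative f (at p) = frechet_derivative g (at p)"
proof -
  have "(\<lambda>f'. (f has_derivative f') (at p)) = (\<lambda>f'. (g has_derivative f') (at p))"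
  proof (intro ext iffI)
    fix f' assume "(f has_derivative f') (at p)"
    then show "(g has_derivative f') (at p)"
      by (rule has_derivative_transform_within_open[OF _ assms(1,2)]) (use assms(3) in auto)
  next
    fix f' assume "(g has_derivative f') (at p)"
    then show "(f has_derivative f') (at p)"
      by (rule has_derivative_transform_within_open[OF _ assms(1,2)]) (use assms(3) in auto)
  qed
  then show ?thesis unfolding frechet_derivative_def by simp
qed

lemma diff_local:
  assumes "f differentiable at p" "open U" "p \<in> U" "\<And>q. q \<in> U \<Longrightarrow> f q = g q"
  shows "g differentiable at p"
  using assms by (meson differentiable_def has_derivative_transform_within_open)

lemma FD_works: "f differentiable at p \<Longrightarrow> (f has_derivative frechet_derivative f (at p)) (at p)"
  using frechet_derivative_works by blast

lemma FD_add:
  assumes "f differentiable at p" "g differentiable at p"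
  shows "frechet_derivative (\<lambda>q. f q + g q) (at p) x = frechet_derivative f (at p) x + frechet_derivative g (at p) x"
proof -
  have "((\<lambda>q. f q + g q) has_derivative (\<lambda>x. frechet_derivative f (at p) x + frechet_derivative g (at p) x)) (at p)"
    by (rule has_derivative_add[OF FD_works[OF assms(1)] FD_works[OF assms(2)]])
  from frechet_derivative_at[OF this] show ?thesis by (rule fun_cong[symmetric])
qed

lemma FD_lin:
  assumes "bounded_linear L" "f differentiable at p"
  shows "frechet_derivative (\<lambda>q. L (f q)) (at p) x = L (frechet_derivative f (at p) x)"
proof -
  have "((\<lambda>q. L (f q)) has_derivative (\<lambda>x. L (frechet_derivative f (at p) x))) (at p)"
    by (rule bounded_linear.has_derivative[OF assms(1) FD_works[OF assms(2)]])
  from frechet_derivative_at[OF this] show ?thesis by (rule fun_cong[symmetric])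
qed

lemma FD_mult:
  fixes f g :: "'a::real_normed_vector \<Rightarrow> 'b::real_normed_algebra"
  assumes "f differentiable at p" "g differentiable at p"
  shows "frechet_derivative (\<lambda>q. f q * g q) (at p) x = f p * frechet_derivative g (at p) x + frechet_derivative f (at p) x * g p"
proof -
  have "((\<lambda>q. f q * g q) has_derivative (\<lambda>x. f p * frechet_derivative g (at p) x + frechet_derivative f (at p) x * g p)) (at p)"
    by (rule has_derivative_mult[OF FD_works[OF assms(1)] FD_works[OF assms(2)]])
  from frechet_derivative_at[OF this] show ?thesis by (rule fun_cong[symmetric])
qed

lemma Dl_append: "Dl (xs @ ys) g = Dl xs (Dl ys g)"
  by (induction xs) auto

lemma Dl_local:
  assumes "open U" "\<And>q. q \<in> U \<Longrightarrow> f q = g q" "p \<in> U"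
  shows "Dl vs f p = Dl vs g p"
  using assms(3)
proof (induction vs arbitrary: p)
  case Nil then show ?case using assms by simp
next
  case (Cons v vs)
  have "frechet_derivative (Dl vs f) (at p) = frechet_derivative (Dl vs g) (at p)"
    by (rule FD_local[OF assms(1) Cons.prems]) (use Cons.IH in auto)
  then show ?case by simp
qed

definition sm :: "nat \<Rightarrow> 'a::real_normed_vector set \<Rightarrow> ('a \<Rightarrow> 'b::real_normed_vector) \<Rightarrow> bool" where
  "sm n U g \<longleftrightarrow> (\<forall>ws::'a list. length ws \<le> n \<longrightarrow> (\<forall>p\<in>U. Dl ws g differentiable at p))"

lemma smooth_sm: "smooth_on U g \<longleftrightarrow> (\<forall>n. sm n U g)"
  unfolding smooth_on_def sm_def
  apply (rule iffI)
   apply blast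
  apply (intro allI ballI)
  subgoal for vs p by (drule spec[of _ "length vs"], drule spec[of _ vs]) simp
  done

lemma smooth_diff_at: "smooth_on U g \<Longrightarrow> p \<in> U \<Longrightarrow> g differentiable at p"
  unfolding smooth_on_def by (drule spec[of _ "[]"]) simp

lemma smooth_local:
  fixes U :: "'a::real_normed_vector set"
  assumes "open U" "\<And>q. q \<in> U \<Longrightarrow> f q = g q" "smooth_on U f"
  shows "smooth_on U g"
  unfolding smooth_on_def
proof (intro allI ballI)
  fix vs :: "'a list" and p assume p: "p \<in> U"
  show "Dl vs g differentiable at p"
    by (rule diff_local[of "Dl vs f" p U]) (use assms p Dl_local[OF assms(1,2)] in \<open>auto simp: smooth_on_def\<close>)
qed

lemma Dl_add_gen:
  assumes U: "open U" and g: "sm n U g" and h: "sm n U h"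
  shows "length vs \<le> n \<Longrightarrow> p \<in> U \<Longrightarrow> Dl vs (\<lambda>q. g q + h q) p = Dl vs g p + Dl vs h p"
proof (induction vs arbitrary: p)
  case Nil then show ?case by simp
next
  case (Cons v vs)
  have ln: "length vs \<le> n" using Cons.prems(1) by simp
  have IHq: "\<And>q. q \<in> U \<Longrightarrow> Dl vs (\<lambda>q. g q + h q) q = Dl vs g q + Dl vs h q"
    using Cons.IH ln by blast
  have eq: "frechet_derivative (Dl vs (\<lambda>q. g q + h q)) (at p) = frechet_derivative (\<lambda>q. Dl vs g q + Dl vs h q) (at p)"
    by (rule FD_local[OF U Cons.prems(2) IHq])
  have d1: "Dl vs g differentiable at p" and d2: "Dl vs h differentiable at p"
    using g h ln Cons.prems(2) unfolding sm_def by blast+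
  have "Dl (v # vs) (\<lambda>q. g q + h q) p = frechet_derivative (\<lambda>q. Dl vs g q + Dl vs h q) (at p) v"
    using eq by simp
  also have "\<dots> = frechet_derivative (Dl vs g) (at p) v + frechet_derivative (Dl vs h) (at p) v"
    by (rule FD_add[OF d1 d2])
  finally show ?case by simp
qed

lemma sm_add:
  assumes U: "open U" and g: "sm n U g" and h: "sm n U h"
  shows "sm n U (\<lambda>q. g q + h q)"
  unfolding sm_def
proof (intro allI impI ballI)
  fix ws :: "'a list" and p assume ws: "length ws \<le> n" and p: "p \<in> U"
  have dd: "(\<lambda>q. Dl ws g q + Dl ws h q) differentiable at p"
    using g h ws p unfolding sm_def by auto
  have eqs: "\<And>q. q \<in> U \<Longrightarrow> Dl ws g q + Dl ws h q = Dl ws (\<lambda>q. g q + h q) q"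
    using Dl_add_gen[OF U g h ws] by simp
  show "Dl ws (\<lambda>q. g q + h q) differentiable at p"
    by (rule diff_local[OF dd U p eqs])
qed

lemma smooth_add:
  assumes U: "open U" and g: "smooth_on U g" and h: "smooth_on U h"
  shows "smooth_on U (\<lambda>q. g q + h q)"
  unfolding smooth_sm
proof
  fix n
  have "sm n U g" "sm n U h" using g h unfolding smooth_sm by blast+
  then show "sm n U (\<lambda>q. g q + h q)" by (rule sm_add[OF U])
qed

lemma Dl_add:
  assumes U: "open U" and g: "smooth_on U g" and h: "smooth_on U h" and p: "p \<in> U"
  shows "Dl vs (\<lambda>q. g q + h q) p = Dl vs g p + Dl vs h p"
proof -
  have "sm (length vs) U g" "sm (length vs) U h" using g h unfolding smooth_sm by blast+
  from Dl_add_gen[OF U this order_refl p] show ?thesis .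
qed

lemma Dl_lin_gen:
  assumes U: "open U" and L: "bounded_linear L" and g: "sm n U g"
  shows "length vs \<le> n \<Longrightarrow> p \<in> U \<Longrightarrow> Dl vs (\<lambda>q. L (g q)) p = L (Dl vs g p)"
proof (induction vs arbitrary: p)
  case Nil then show ?case by simp
next
  case (Cons v vs)
  have ln: "length vs \<le> n" using Cons.prems(1) by simp
  have IHq: "\<And>q. q \<in> U \<Longrightarrow> Dl vs (\<lambda>q. L (g q)) q = L (Dl vs g q)"
    using Cons.IH ln by blast
  have eq: "frechet_derivative (Dl vs (\<lambda>q. L (g q))) (at p) = frechet_derivative (\<lambda>q. L (Dl vs g q)) (at p)"
    by (rule FD_local[OF U Cons.prems(2) IHq])
  have d: "Dl vs g differentiable at p"
    using g ln Cons.prems(2) unfolding sm_def by blast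
  have "Dl (v # vs) (\<lambda>q. L (g q)) p = frechet_derivative (\<lambda>q. L (Dl vs g q)) (at p) v"
    using eq by simp
  also have "\<dots> = L (frechet_derivative (Dl vs g) (at p) v)" by (rule FD_lin[OF L d])
  finally show ?case by simp
qed

lemma smooth_lin:
  fixes U :: "'a::real_normed_vector set"
  assumes U: "open U" and L: "bounded_linear L" and g: "smooth_on U g"
  shows "smooth_on U (\<lambda>q. L (g q))"
  unfolding smooth_on_def
proof (intro allI ballI)
  fix ws :: "'a list" and p assume p: "p \<in> U"
  have d: "Dl ws g differentiable at p" using g p unfolding smooth_on_def by blast
  have dd: "(\<lambda>q. L (Dl ws g q)) differentiable at p"
    using differentiable_compose[OF bounded_linear_imp_differentiable[OF L] d] .
  have sm: "sm (length ws) U g" using g smooth_sm by blast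
  have eqs: "\<And>q. q \<in> U \<Longrightarrow> L (Dl ws g q) = Dl ws (\<lambda>q. L (g q)) q"
    using Dl_lin_gen[OF U L sm] by simp
  show "Dl ws (\<lambda>q. L (g q)) differentiable at p"
    by (rule diff_local[OF dd U p eqs])
qed

lemma Dl_const: "\<exists>c'. Dl vs (\<lambda>_. c) = (\<lambda>_. c')"
proof (induction vs)
  case Nil show ?case by auto
next
  case (Cons v vs)
  then obtain c' where "Dl vs (\<lambda>_. c) = (\<lambda>_. c')" by blast
  then have "Dl (v # vs) (\<lambda>_. c) = (\<lambda>_. 0)" by simp
  then show ?case by blast
qed

lemma smooth_const: "smooth_on (U::'a::real_normed_vector set) (\<lambda>_. c)"
  unfolding smooth_on_def
proof (intro allI ballI)
  fix vs :: "'a list" and p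
  obtain c' where "Dl vs (\<lambda>_. c) = (\<lambda>_. c')" using Dl_const by blast
  then show "Dl vs (\<lambda>_. c) differentiable at p" by simp
qed

lemma smooth_deriv:
  assumes "smooth_on U g" shows "smooth_on U (\<lambda>p. frechet_derivative g (at p) v)"
proof -
  have e: "Dl vs (\<lambda>p. frechet_derivative g (at p) v) = Dl (vs @ [v]) g" for vs
    by (simp add: Dl_append)
  show ?thesis unfolding smooth_on_def e using assms unfolding smooth_on_def by blast
qed

lemma smooth_mult_sm:
  fixes b h :: "'a::real_normed_vector \<Rightarrow> 'b::real_normed_algebra"
  assumes U: "open U"
  shows "smooth_on U b \<Longrightarrow> smooth_on U h \<Longrightarrow> sm n U (\<lambda>q. b q * h q)"
proof (induction n arbitrary: b h)
  case 0
  then show ?case unfolding sm_def by (auto simp: smooth_diff_at)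
next
  case (Suc n)
  show ?case unfolding sm_def
  proof (intro allI impI ballI)
    fix ws :: "'a list" and p assume ws: "length ws \<le> Suc n" and p: "p \<in> U"
    show "Dl ws (\<lambda>q. b q * h q) differentiable at p"
    proof (cases ws rule: rev_exhaust)
      case Nil then show ?thesis using Suc.prems p by (auto simp: smooth_diff_at)
    next
      case (snoc xs v)
      have xs: "length xs \<le> n" using ws snoc by simp
      define b' where "b' = (\<lambda>q. frechet_derivative b (at q) v)"
      define h' where "h' = (\<lambda>q. frechet_derivative h (at q) v)"
      have d1: "smooth_on U b'" "smooth_on U h'"
        unfolding b'_def h'_def using Suc.prems by (auto intro: smooth_deriv)
      have s1: "sm n U (\<lambda>q. b q * h' q)" "sm n U (\<lambda>q. b' q * h q)"
        using Suc.IH[OF Suc.prems(1) d1(2)] Suc.IH[OF d1(1) Suc.prems(2)] by auto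
      have eqU: "frechet_derivative (\<lambda>q. b q * h q) (at q) v = b q * h' q + b' q * h q" if "q \<in> U" for q
        unfolding b'_def h'_def using FD_mult[of b q h v] Suc.prems that by (simp add: smooth_diff_at)
      have "Dl xs (\<lambda>q. b q * h' q + b' q * h q) differentiable at p"
        using sm_add[OF U s1] xs p unfolding sm_def by blast
      moreover have "\<And>q. q \<in> U \<Longrightarrow> Dl xs (\<lambda>q. b q * h' q + b' q * h q) q = Dl xs (\<lambda>q. frechet_derivative (\<lambda>q. b q * h q) (at q) v) q"
        using Dl_local[OF U, of "\<lambda>q. b q * h' q + b' q * h q" "\<lambda>q. frechet_derivative (\<lambda>q. b q * h q) (at q) v"] eqU by simp
      ultimately have "Dl xs (\<lambda>q. frechet_derivative (\<lambda>q. b q * h q) (at q) v) differentiable at p"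
        using diff_local[OF _ U p] by blast
      then show ?thesis unfolding snoc Dl_append by simp
    qed
  qed
qed

lemma smooth_mult:
  fixes b h :: "'a::real_normed_vector \<Rightarrow> 'b::real_normed_algebra"
  assumes "open U" "smooth_on U b" "smooth_on U h"
  shows "smooth_on U (\<lambda>q. b q * h q)"
  using smooth_mult_sm[OF assms] unfolding smooth_sm by blast


fun Dc :: "('a \<times> 'a) list \<Rightarrow> ('a::real_normed_vector \<Rightarrow> complex) \<Rightarrow> 'a \<Rightarrow> complex" where
  "Dc [] g = g"
| "Dc (c # cs) g = (\<lambda>p. cdiff (Dc cs g) p c)"

lemma Dc_append: "Dc (xs @ ys) g = Dc xs (Dc ys g)"
  by (induction xs) auto

lemma cdiff_local:
  assumes "open U" "p \<in> U" "\<And>q. q \<in> U \<Longrightarrow> f q = g q"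
  shows "cdiff f p c = cdiff g p c"
proof -
  have "frechet_derivative f (at p) = frechet_derivative g (at p)" by (rule FD_local[OF assms])
  then show ?thesis by (simp add: cdiff_def)
qed

lemma Dc_local:
  assumes U: "open U" and fg: "\<And>q. q \<in> U \<Longrightarrow> f q = g q"
  shows "p \<in> U \<Longrightarrow> Dc cs f p = Dc cs g p"
proof (induction cs arbitrary: p)
  case Nil then show ?case using fg by simp
next
  case (Cons c cs)
  have "\<And>q. q \<in> U \<Longrightarrow> Dc cs f q = Dc cs g q" using Cons.IH by blast
  from cdiff_local[OF U Cons.prems this] show ?case by simp
qed

lemma smooth_cdiff:
  fixes U :: "'a::real_normed_vector set"
  assumes U: "open U" and g: "smooth_on U g"
  shows "smooth_on U (\<lambda>p. cdiff g p c)"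
  unfolding cdiff_def
  by (rule smooth_add[OF U smooth_deriv[OF g] smooth_lin[OF U bounded_linear_mult_right smooth_deriv[OF g]]])

lemma smooth_Dc:
  fixes U :: "'a::real_normed_vector set"
  assumes U: "open U" and g: "smooth_on U g"
  shows "smooth_on U (Dc cs g)"
proof (induction cs)
  case Nil then show ?case using g by simp
next
  case (Cons c cs)
  from smooth_cdiff[OF U this] show ?case by simp
qed

lemma cdiff_add:
  assumes "f differentiable at p" "g differentiable at p"
  shows "cdiff (\<lambda>q. f q + g q) p c = cdiff f p c + cdiff g p c"
  using FD_add[OF assms] by (simp add: cdiff_def algebra_simps)

lemma cdiff_cmult:
  assumes "f differentiable at p"
  shows "cdiff (\<lambda>q. a * f q) p c = a * cdiff f p c"
  using FD_lin[OF bounded_linear_mult_right[of a] assms] by (simp add: cdiff_def algebra_simps)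

lemma cdiff_mult:
  assumes "f differentiable at p" "g differentiable at p"
  shows "cdiff (\<lambda>q. f q * g q) p c = f p * cdiff g p c + cdiff f p c * g p"
  using FD_mult[OF assms] by (simp add: cdiff_def algebra_simps)

lemma Dc_add:
  assumes U: "open U" and f: "smooth_on U f" and g: "smooth_on U g"
  shows "p \<in> U \<Longrightarrow> Dc cs (\<lambda>q. f q + g q) p = Dc cs f p + Dc cs g p"
proof (induction cs arbitrary: p)
  case Nil then show ?case by simp
next
  case (Cons c cs)
  have IHq: "\<And>q. q \<in> U \<Longrightarrow> Dc cs (\<lambda>q. f q + g q) q = Dc cs f q + Dc cs g q" using Cons.IH by blast
  have d1: "Dc cs f differentiable at p" by (rule smooth_diff_at[OF smooth_Dc[OF U f] Cons.prems])
  have d2: "Dc cs g differentiable at p" by (rule smooth_diff_at[OF smooth_Dc[OF U g] Cons.prems])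
  have "Dc (c # cs) (\<lambda>q. f q + g q) p = cdiff (\<lambda>q. Dc cs f q + Dc cs g q) p c"
    using cdiff_local[OF U Cons.prems IHq] by simp
  also have "\<dots> = cdiff (Dc cs f) p c + cdiff (Dc cs g) p c" by (rule cdiff_add[OF d1 d2])
  finally show ?case by simp
qed

lemma Dc_cmult:
  assumes U: "open U" and f: "smooth_on U f"
  shows "p \<in> U \<Longrightarrow> Dc cs (\<lambda>q. a * f q) p = a * Dc cs f p"
proof (induction cs arbitrary: p)
  case Nil then show ?case by simp
next
  case (Cons c cs)
  have IHq: "\<And>q. q \<in> U \<Longrightarrow> Dc cs (\<lambda>q. a * f q) q = a * Dc cs f q" using Cons.IH by blast
  have d1: "Dc cs f differentiable at p" by (rule smooth_diff_at[OF smooth_Dc[OF U f] Cons.prems])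
  have "Dc (c # cs) (\<lambda>q. a * f q) p = cdiff (\<lambda>q. a * Dc cs f q) p c"
    using cdiff_local[OF U Cons.prems IHq] by simp
  also have "\<dots> = a * cdiff (Dc cs f) p c" by (rule cdiff_cmult[OF d1])
  finally show ?case by simp
qed

lemma Dc_swap2:
  assumes U: "open U" and g: "smooth_on U g" and p: "p \<in> U"
  shows "Dc [c1, c2] g p = Dc [c2, c1] g p"
proof -
  define S where "S a b = frechet_derivative (\<lambda>q. frechet_derivative g (at q) a) (at p) b" for a b
  have hd: "(\<lambda>q. frechet_derivative g (at q) a) differentiable at p" for a
    by (rule smooth_diff_at[OF smooth_deriv[OF g] p])
  have gd: "\<And>q. q \<in> U \<Longrightarrow> g differentiable at q" using smooth_diff_at[OF g] by blast
  have sym: "S a b = S b a" for a b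
    unfolding S_def by (rule schwarz[OF U p gd hd hd])
  have key: "Dc [(u1, w1), (u2, w2)] g p = S u2 u1 + \<i> * S w2 u1 + \<i> * (S u2 w1 + \<i> * S w2 w1)"
    for u1 w1 u2 w2
  proof -
    have e1: "frechet_derivative (\<lambda>q. frechet_derivative g (at q) u2 + \<i> * frechet_derivative g (at q) w2) (at p) x
        = S u2 x + \<i> * S w2 x" for x
      unfolding S_def
      using FD_add[OF hd differentiable_compose[OF bounded_linear_imp_differentiable[OF bounded_linear_mult_right] hd]]
        FD_lin[OF bounded_linear_mult_right hd]
      by simp
    show ?thesis by (simp add: cdiff_def e1)
  qed
  obtain u1 w1 where c1: "c1 = (u1, w1)" by fastforce
  obtain u2 w2 where c2: "c2 = (u2, w2)" by fastforce
  show ?thesis unfolding c1 c2 key using sym[of u1 u2] sym[of w1 u2] sym[of u1 w2] sym[of w1 w2]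
    by (simp add: algebra_simps)
qed

lemma Dc_swap_mid:
  assumes U: "open U" and g: "smooth_on U g" and p: "p \<in> U"
  shows "Dc (xs @ c1 # c2 # ys) g p = Dc (xs @ c2 # c1 # ys) g p"
proof -
  have s: "smooth_on U (Dc ys g)" by (rule smooth_Dc[OF U g])
  have e: "\<And>q. q \<in> U \<Longrightarrow> Dc [c1, c2] (Dc ys g) q = Dc [c2, c1] (Dc ys g) q"
    using Dc_swap2[OF U s] by blast
  have "Dc (xs @ c1 # c2 # ys) g p = Dc xs (Dc [c1, c2] (Dc ys g)) p"
    using Dc_append[of xs "c1 # c2 # ys" g] Dc_append[of "[c1, c2]" ys g] by simp
  also have "\<dots> = Dc xs (Dc [c2, c1] (Dc ys g)) p" by (rule Dc_local[OF U e p])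
  also have "\<dots> = Dc (xs @ c2 # c1 # ys) g p"
    using Dc_append[of xs "c2 # c1 # ys" g] Dc_append[of "[c2, c1]" ys g] by simp
  finally show ?thesis .
qed

lemma Dc_bubble:
  assumes U: "open U" and g: "smooth_on U g"
  shows "p \<in> U \<Longrightarrow> Dc (xs @ a # ys) g p = Dc (a # xs @ ys) g p"
proof (induction xs arbitrary: p)
  case Nil then show ?case by simp
next
  case (Cons x xs)
  have IHq: "\<And>q. q \<in> U \<Longrightarrow> Dc (xs @ a # ys) g q = Dc (a # xs @ ys) g q" using Cons.IH by blast
  have "Dc ((x # xs) @ a # ys) g p = cdiff (Dc (a # xs @ ys) g) p x"
    using cdiff_local[OF U Cons.prems IHq] by simp
  also have "\<dots> = Dc ([] @ x # a # (xs @ ys)) g p" by simp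
  also have "\<dots> = Dc ([] @ a # x # (xs @ ys)) g p" by (rule Dc_swap_mid[OF U g Cons.prems])
  finally show ?case by simp
qed

lemma Dc_perm:
  assumes U: "open U" and g: "smooth_on U g"
  shows "mset cs1 = mset cs2 \<Longrightarrow> p \<in> U \<Longrightarrow> Dc cs1 g p = Dc cs2 g p"
proof (induction cs1 arbitrary: cs2 p)
  case Nil then show ?case by simp
next
  case (Cons a rest)
  have "a \<in> set cs2" using Cons.prems(1) by (metis list.set_intros(1) set_mset_mset)
  then obtain xs ys where cs2: "cs2 = xs @ a # ys" by (meson split_list)
  have m: "mset rest = mset (xs @ ys)" using Cons.prems(1) unfolding cs2 by simp
  have IHq: "\<And>q. q \<in> U \<Longrightarrow> Dc rest g q = Dc (xs @ ys) g q" using Cons.IH[OF m] by blast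
  have "Dc (a # rest) g p = cdiff (Dc (xs @ ys) g) p a"
    using cdiff_local[OF U Cons.prems(2) IHq] by simp
  also have "\<dots> = Dc (a # xs @ ys) g p" by simp
  also have "\<dots> = Dc cs2 g p" unfolding cs2 by (rule Dc_bubble[OF U g Cons.prems(2), symmetric])
  finally show ?case .
qed


definition Vc :: "('a \<times> 'a) set \<Rightarrow> 'a \<Rightarrow> nat \<Rightarrow> ('a::real_normed_vector \<Rightarrow> complex) \<Rightarrow> bool" where
  "Vc A x0 r g \<longleftrightarrow> (\<forall>cs. set cs \<subseteq> A \<and> length cs < r \<longrightarrow> Dc cs g x0 = 0)"

lemma VcD: "Vc A x0 r g \<Longrightarrow> set cs \<subseteq> A \<Longrightarrow> length cs < r \<Longrightarrow> Dc cs g x0 = 0"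
  unfolding Vc_def by blast

lemma VcI: "(\<And>cs. set cs \<subseteq> A \<Longrightarrow> length cs < r \<Longrightarrow> Dc cs g x0 = 0) \<Longrightarrow> Vc A x0 r g"
  unfolding Vc_def by blast

lemma Vc_mono: "Vc A x0 r g \<Longrightarrow> r' \<le> r \<Longrightarrow> Vc A x0 r' g"
  unfolding Vc_def by auto

lemma Vc_deriv:
  assumes "Vc A x0 (Suc r) h" "c \<in> A"
  shows "Vc A x0 r (\<lambda>q. cdiff h q c)"
proof (rule VcI)
  fix cs assume cs: "set cs \<subseteq> A" "length cs < r"
  have "Dc cs (\<lambda>q. cdiff h q c) x0 = Dc (cs @ [c]) h x0" by (simp add: Dc_append)
  also have "\<dots> = 0" by (rule VcD[OF assms(1)]) (use cs assms(2) in auto)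
  finally show "Dc cs (\<lambda>q. cdiff h q c) x0 = 0" .
qed

lemma Dc_zero: "Dc cs (\<lambda>_. 0) = (\<lambda>_. 0)"
  by (induction cs) (auto simp: cdiff_def)

context
  fixes U :: "'a::real_normed_vector set" and x0 :: 'a and A :: "('a \<times> 'a) set"
  assumes U: "open U" and x0: "x0 \<in> U"
begin

lemma Vc_local: "(\<And>q. q \<in> U \<Longrightarrow> f q = g q) \<Longrightarrow> Vc A x0 r f \<Longrightarrow> Vc A x0 r g"
  unfolding Vc_def using Dc_local[OF U _ x0] by metis

lemma Vc_add: "smooth_on U f \<Longrightarrow> smooth_on U g \<Longrightarrow> Vc A x0 r f \<Longrightarrow> Vc A x0 r g \<Longrightarrow> Vc A x0 r (\<lambda>q. f q + g q)"
  unfolding Vc_def using Dc_add[OF U _ _ x0] by simp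

lemma Vc_cmult: "smooth_on U f \<Longrightarrow> Vc A x0 r f \<Longrightarrow> Vc A x0 r (\<lambda>q. a * f q)"
  unfolding Vc_def using Dc_cmult[OF U _ x0] by simp

lemma smooth_sum:
  assumes "finite S" "\<And>j. j \<in> S \<Longrightarrow> smooth_on U (F j)"
  shows "smooth_on U (\<lambda>q. \<Sum>j\<in>S. F j q)"
  using assms
proof (induction S rule: finite_induct)
  case empty then show ?case by (simp add: smooth_const)
next
  case (insert x S)
  have "smooth_on U (\<lambda>q. F x q + (\<Sum>j\<in>S. F j q))"
    by (rule smooth_add[OF U]) (use insert in auto)
  then show ?case using insert by simp
qed

lemma Vc_sum:
  assumes "finite S" "\<And>j. j \<in> S \<Longrightarrow> smooth_on U (F j)" "\<And>j. j \<in> S \<Longrightarrow> Vc A x0 r (F j)"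
  shows "Vc A x0 r (\<lambda>q. \<Sum>j\<in>S. F j q)"
  using assms
proof (induction S rule: finite_induct)
  case empty then show ?case unfolding Vc_def by (simp add: Dc_zero)
next
  case (insert x S)
  have "Vc A x0 r (\<lambda>q. F x q + (\<Sum>j\<in>S. F j q))"
  proof (rule Vc_add)
    show "smooth_on U (\<lambda>q. \<Sum>j\<in>S. F j q)" by (rule smooth_sum) (use insert in auto)
  qed (use insert in auto)
  then show ?case using insert by simp
qed

lemma Dc_snoc_mult:
  assumes b: "smooth_on U b" and h: "smooth_on U h"
  shows "Dc (ws @ [c]) (\<lambda>q. b q * h q) x0
       = Dc ws (\<lambda>q. b q * cdiff h q c) x0 + Dc ws (\<lambda>q. cdiff b q c * h q) x0"
proof -
  have eq: "\<And>q. q \<in> U \<Longrightarrow> cdiff (\<lambda>q. b q * h q) q c = b q * cdiff h q c + cdiff b q c * h q"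
    using cdiff_mult smooth_diff_at b h by blast
  have "Dc (ws @ [c]) (\<lambda>q. b q * h q) x0 = Dc ws (\<lambda>q. cdiff (\<lambda>q. b q * h q) q c) x0"
    by (simp add: Dc_append)
  also have "\<dots> = Dc ws (\<lambda>q. b q * cdiff h q c + cdiff b q c * h q) x0"
    by (rule Dc_local[OF U eq x0])
  also have "\<dots> = Dc ws (\<lambda>q. b q * cdiff h q c) x0 + Dc ws (\<lambda>q. cdiff b q c * h q) x0"
    by (rule Dc_add[OF U smooth_mult[OF U b smooth_cdiff[OF U h]] smooth_mult[OF U smooth_cdiff[OF U b] h] x0])
  finally show ?thesis .
qed

lemma Vc_mult:
  "smooth_on U b \<Longrightarrow> smooth_on U h \<Longrightarrow> A \<noteq> {} \<Longrightarrow> Vc A x0 r h \<Longrightarrow> Vc A x0 r (\<lambda>q. b q * h q)"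
proof (induction r arbitrary: b h)
  case 0 then show ?case unfolding Vc_def by simp
next
  case (Suc r)
  show ?case
  proof (rule VcI)
    fix cs assume cs: "set cs \<subseteq> A" "length cs < Suc r"
    show "Dc cs (\<lambda>q. b q * h q) x0 = 0"
    proof (cases cs rule: rev_exhaust)
      case Nil
      have "h x0 = 0" using VcD[OF Suc.prems(4), of "[]"] by simp
      then show ?thesis using Nil by simp
    next
      case (snoc ws c)
      have ws: "set ws \<subseteq> A" "length ws < r" "c \<in> A" using cs snoc by auto
      have v1: "Vc A x0 r (\<lambda>q. b q * cdiff h q c)"
        by (rule Suc.IH[OF Suc.prems(1) smooth_cdiff[OF U Suc.prems(2)] Suc.prems(3) Vc_deriv[OF Suc.prems(4) ws(3)]])
      have v2: "Vc A x0 r (\<lambda>q. cdiff b q c * h q)"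
        by (rule Suc.IH[OF smooth_cdiff[OF U Suc.prems(1)] Suc.prems(2) Suc.prems(3) Vc_mono[OF Suc.prems(4)]]) simp
      show ?thesis unfolding snoc Dc_snoc_mult[OF Suc.prems(1,2)]
        using VcD[OF v1 ws(1,2)] VcD[OF v2 ws(1,2)] by simp
    qed
  qed
qed

lemma Vc_mult0:
  "smooth_on U b \<Longrightarrow> smooth_on U h \<Longrightarrow> A \<noteq> {} \<Longrightarrow> b x0 = 0 \<Longrightarrow> Vc A x0 r h \<Longrightarrow> Vc A x0 (Suc r) (\<lambda>q. b q * h q)"
proof (induction r arbitrary: h)
  case 0
  show ?case
  proof (rule VcI)
    fix cs :: "('a \<times> 'a) list" assume "length cs < Suc 0"
    then show "Dc cs (\<lambda>q. b q * h q) x0 = 0" using 0 by simp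
  qed
next
  case (Suc r)
  show ?case
  proof (rule VcI)
    fix cs assume cs: "set cs \<subseteq> A" "length cs < Suc (Suc r)"
    show "Dc cs (\<lambda>q. b q * h q) x0 = 0"
    proof (cases cs rule: rev_exhaust)
      case Nil
      then show ?thesis using Suc.prems(4) by simp
    next
      case (snoc ws c)
      have ws: "set ws \<subseteq> A" "length ws < Suc r" "c \<in> A" using cs snoc by auto
      have v1: "Vc A x0 (Suc r) (\<lambda>q. b q * cdiff h q c)"
        by (rule Suc.IH[OF Suc.prems(1) smooth_cdiff[OF U Suc.prems(2)] Suc.prems(3,4) Vc_deriv[OF Suc.prems(5) ws(3)]])
      have v2: "Vc A x0 (Suc r) (\<lambda>q. cdiff b q c * h q)"
        by (rule Vc_mult[OF smooth_cdiff[OF U Suc.prems(1)] Suc.prems(2) Suc.prems(3) Suc.prems(5)])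
      show ?thesis unfolding snoc Dc_snoc_mult[OF Suc.prems(1,2)]
        using VcD[OF v1 ws(1,2)] VcD[OF v2 ws(1,2)] by simp
    qed
  qed
qed

end


definition dzb :: "'n::finite \<Rightarrow> (complex^'n) \<times> (complex^'n)" where
  "dzb k = ((1/2) *\<^sub>R axis k 1, (1/2) *\<^sub>R axis k \<i>)"

definition Aset :: "((complex^'n::finite) \<times> (complex^'n)) set" where
  "Aset = range dz_vec \<union> range dzb"

lemma Aset_ne: "Aset \<noteq> {}" unfolding Aset_def by blast

lemma dz_in: "dz_vec k \<in> Aset" and dzb_in: "dzb k \<in> Aset" unfolding Aset_def by auto

lemma FD_coord:
  fixes g :: "complex^'n::finite \<Rightarrow> complex"
  assumes "g differentiable at p"
  shows "frechet_derivative g (at p) (axis j 1) = cdiff g p (dz_vec j) + cdiff g p (dzb j)"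
    and "frechet_derivative g (at p) (axis j \<i>) = \<i> * cdiff g p (dz_vec j) + (- \<i>) * cdiff g p (dzb j)"
proof -
  have lin: "linear (frechet_derivative g (at p))" using FD_works[OF assms] has_derivative_linear by blast
  define a where "a = frechet_derivative g (at p) (axis j 1)"
  define b where "b = frechet_derivative g (at p) (axis j \<i>)"
  have 1: "cdiff g p (dz_vec j) = (1/2) * a - \<i> * ((1/2) * b)"
    unfolding cdiff_def dz_vec_def a_def b_def using linear_scale[OF lin] linear_neg[OF lin]
    by (simp add: scaleR_conv_of_real)
  have 2: "cdiff g p (dzb j) = (1/2) * a + \<i> * ((1/2) * b)"
    unfolding cdiff_def dzb_def a_def b_def using linear_scale[OF lin]
    by (simp add: scaleR_conv_of_real)
  show "frechet_derivative g (at p) (axis j 1) = cdiff g p (dz_vec j) + cdiff g p (dzb j)"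
    unfolding 1 2 a_def[symmetric] by (simp add: field_simps)
  show "frechet_derivative g (at p) (axis j \<i>) = \<i> * cdiff g p (dz_vec j) + (- \<i>) * cdiff g p (dzb j)"
    unfolding 1 2 b_def[symmetric] by (simp add: field_simps)
qed

context
  fixes U :: "(complex^'n::finite) set" and x0
  assumes U: "open U" and x0: "x0 \<in> U"
begin

lemma Vc_H:
  assumes g: "smooth_on U g" and v: "Vc Aset x0 (Suc r) g"
  shows "Vc Aset x0 r (\<lambda>p. frechet_derivative g (at p) (axis j 1))"
    and "Vc Aset x0 r (\<lambda>p. frechet_derivative g (at p) (axis j \<i>))"
proof -
  have s1: "smooth_on U (\<lambda>p. cdiff g p (dz_vec j))" "smooth_on U (\<lambda>p. cdiff g p (dzb j))"
    using smooth_cdiff[OF U g] by blast+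
  have v1: "Vc Aset x0 r (\<lambda>p. cdiff g p (dz_vec j))" "Vc Aset x0 r (\<lambda>p. cdiff g p (dzb j))"
    using Vc_deriv[OF v dz_in] Vc_deriv[OF v dzb_in] by blast+
  have "Vc Aset x0 r (\<lambda>p. cdiff g p (dz_vec j) + cdiff g p (dzb j))"
    by (rule Vc_add[OF U x0 s1 v1])
  then show "Vc Aset x0 r (\<lambda>p. frechet_derivative g (at p) (axis j 1))"
    by (rule Vc_local[OF U x0, rotated]) (simp add: FD_coord(1)[OF smooth_diff_at[OF g]])
  have "Vc Aset x0 r (\<lambda>p. \<i> * cdiff g p (dz_vec j) + (- \<i>) * cdiff g p (dzb j))"
    by (rule Vc_add[OF U x0 smooth_lin[OF U bounded_linear_mult_right s1(1)] smooth_lin[OF U bounded_linear_mult_right s1(2)]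
          Vc_cmult[OF U x0 s1(1) v1(1)] Vc_cmult[OF U x0 s1(2) v1(2)]])
  then show "Vc Aset x0 r (\<lambda>p. frechet_derivative g (at p) (axis j \<i>))"
    by (rule Vc_local[OF U x0, rotated]) (simp add: FD_coord(2)[OF smooth_diff_at[OF g]])
qed

lemma Vc_Dl:
  "smooth_on U g \<Longrightarrow> Vc Aset x0 r g \<Longrightarrow> set vs \<subseteq> real_coord_dirs \<Longrightarrow> length vs < r \<Longrightarrow> Dl vs g x0 = 0"
proof (induction r arbitrary: g vs)
  case 0 then show ?case by simp
next
  case (Suc r)
  show ?case
  proof (cases vs rule: rev_exhaust)
    case Nil
    then show ?thesis using VcD[OF Suc.prems(2), of "[]"] by simp
  next
    case (snoc ws v)
    have ws: "set ws \<subseteq> real_coord_dirs" "length ws < r" "v \<in> real_coord_dirs" using Suc.prems snoc by auto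
    have e: "Dl vs g x0 = Dl ws (\<lambda>p. frechet_derivative g (at p) v) x0" unfolding snoc by (simp add: Dl_append)
    obtain j where "v = axis j 1 \<or> v = axis j \<i>" using ws(3) unfolding real_coord_dirs_def by blast
    then have "Vc Aset x0 r (\<lambda>p. frechet_derivative g (at p) v)"
      using Vc_H[OF Suc.prems(1,2)] by blast
    from Suc.IH[OF smooth_deriv[OF Suc.prems(1)] this ws(1,2)] show ?thesis unfolding e .
  qed
qed

end

lemma funpow_dz: "(dz k ^^ n) h = Dc (replicate n (dz_vec k)) h"
  by (induction n) (auto simp: dz_def)

lemma foldr_dz: "foldr (\<lambda>k h. (dz k ^^ \<alpha> k) h) xs g = Dc (concat (map (\<lambda>k. replicate (\<alpha> k) (dz_vec k)) xs)) g"
  by (induction xs) (auto simp: funpow_dz Dc_append)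

lemma mset_concat_rep:
  "distinct xs \<Longrightarrow> mset (concat (map (\<lambda>k. replicate (count M k) (F k)) xs)) = image_mset F (filter_mset (\<lambda>k. k \<in> set xs) M)"
proof (induction xs)
  case Nil then show ?case by simp
next
  case (Cons x xs)
  have "filter_mset (\<lambda>k. k \<in> set (x # xs)) M = filter_mset (\<lambda>k. k = x) M + filter_mset (\<lambda>k. k \<in> set xs) M"
    using Cons.prems by (auto simp: multiset_eq_iff)
  moreover have "filter_mset (\<lambda>k. k = x) M = replicate_mset (count M x) x" by (rule filter_eq_replicate_mset)
  ultimately show ?case using Cons by simp
qed


theorem lemma4p4:
  fixes U :: "((complex, 'n::{finite,linorder}) vec) set"
    and J :: "(complex, 'n) vec \<Rightarrow> (complex, 'n) vec \<Rightarrow> (complex, 'n) vec"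
    and f :: "(complex, 'n) vec \<Rightarrow> complex"
    and x0 :: "(complex, 'n) vec" and m :: nat
  assumes "open U" and "x0 \<in> U"
    and "almost_complex_on U J"
    and "\<forall>k. dz_vec k \<in> T10 J x0"
    and "J_holomorphic_on U J f"
    and "\<forall>\<alpha>. multi_deg \<alpha> \<le> m \<longrightarrow> dz_multi \<alpha> f x0 = 0"
  shows "ord_at f x0 \<ge> enat (m + 1)"
proof -
  note U = assms(1) and x0 = assms(2)
  have fs: "smooth_on U f" using assms(5) unfolding J_holomorphic_on_def by blast
  have Jlin: "\<And>p. p \<in> U \<Longrightarrow> linear (J p)" and JJ: "\<And>p v. p \<in> U \<Longrightarrow> J p (J p v) = - v"
    and Js: "\<And>v. smooth_on U (\<lambda>p. J p v)"
    using assms(3) unfolding almost_complex_on_def by blast+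
  have hol: "frechet_derivative f (at p) u + \<i> * frechet_derivative f (at p) (J p u) = 0" if p: "p \<in> U" for p u
  proof -
    have "(u, J p u) \<in> T01 J p" unfolding T01_def cJ_def cmult_i_def using JJ[OF p] by simp
    then have "cdiff f p (u, J p u) = 0" using assms(5) p unfolding J_holomorphic_on_def by blast
    then show ?thesis unfolding cdiff_def by simp
  qed
  have Jx0: "J x0 (axis k 1) = axis k \<i>" for k
  proof -
    have "cJ J x0 (dz_vec k) = cmult_i (dz_vec k)" using assms(4) unfolding T10_def by blast
    then have "J x0 ((1/2) *\<^sub>R axis k 1) = (1/2) *\<^sub>R axis k \<i>"
      unfolding cJ_def cmult_i_def dz_vec_def by simp
    then have "(1/2) *\<^sub>R J x0 (axis k 1) = (1/2) *\<^sub>R axis k \<i>"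
      using linear_scale[OF Jlin[OF x0]] by simp
    then show ?thesis by simp
  qed
  define Lre where "Lre j (w::(complex, 'n) vec) = complex_of_real (Re (w $ j))" for j w
  define Lim where "Lim j (w::(complex, 'n) vec) = complex_of_real (Im (w $ j))" for j w
  have blre: "bounded_linear (Lre j)" for j
    unfolding Lre_def
    by (rule bounded_linear_compose[OF bounded_linear_of_real bounded_linear_compose[OF bounded_linear_Re bounded_linear_vec_nth]])
  have blim: "bounded_linear (Lim j)" for j
    unfolding Lim_def
    by (rule bounded_linear_compose[OF bounded_linear_of_real bounded_linear_compose[OF bounded_linear_Im bounded_linear_vec_nth]])
  define \<beta> where "\<beta> k j p = Lre j (J p (axis k 1)) + (- Lre j (axis k \<i>))" for k j p
  define \<gamma> where "\<gamma> k j p = Lim j (J p (axis k 1)) + (- Lim j (axis k \<i>))" for k j p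
  have s\<beta>: "smooth_on U (\<beta> k j)" for k j
    unfolding \<beta>_def by (rule smooth_add[OF U smooth_lin[OF U blre Js] smooth_const])
  have s\<gamma>: "smooth_on U (\<gamma> k j)" for k j
    unfolding \<gamma>_def by (rule smooth_add[OF U smooth_lin[OF U blim Js] smooth_const])
  have \<beta>0: "\<beta> k j x0 = 0" for k j unfolding \<beta>_def Jx0 by simp
  have \<gamma>0: "\<gamma> k j x0 = 0" for k j unfolding \<gamma>_def Jx0 by simp
  define H where "H j p = frechet_derivative f (at p) (axis j 1)" for j p
  define H' where "H' j p = frechet_derivative f (at p) (axis j \<i>)" for j p
  have sH: "smooth_on U (H j)" "smooth_on U (H' j)" for j
    unfolding H_def H'_def using smooth_deriv[OF fs] by blast+
  have decomp: "frechet_derivative f (at p) w = (\<Sum>j\<in>UNIV. Lre j w * H j p + Lim j w * H' j p)"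
    if p: "p \<in> U" for p w
  proof -
    have lin: "linear (frechet_derivative f (at p))"
      using FD_works[OF smooth_diff_at[OF fs p]] has_derivative_linear by blast
    have w: "w = (\<Sum>j\<in>UNIV. Re (w $ j) *\<^sub>R axis j 1 + Im (w $ j) *\<^sub>R axis j \<i>)"
    proof (rule vec_eq_iff[THEN iffD2], rule allI)
      fix i
      have "(\<Sum>j\<in>UNIV. Re (w $ j) *\<^sub>R axis j 1 + Im (w $ j) *\<^sub>R axis j \<i>) $ i
          = (\<Sum>j\<in>UNIV. (if i = j then Re (w $ j) *\<^sub>R 1 + Im (w $ j) *\<^sub>R \<i> else 0))"
        unfolding sum_component by (intro sum.cong) (auto simp: axis_def)
      also have "\<dots> = Re (w $ i) *\<^sub>R 1 + Im (w $ i) *\<^sub>R \<i>" by simp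
      also have "\<dots> = w $ i" by (simp add: complex_eq_iff)
      finally show "w $ i = (\<Sum>j\<in>UNIV. Re (w $ j) *\<^sub>R axis j 1 + Im (w $ j) *\<^sub>R axis j \<i>) $ i" by simp
    qed
    have "frechet_derivative f (at p) w = frechet_derivative f (at p) (\<Sum>j\<in>UNIV. Re (w $ j) *\<^sub>R axis j 1 + Im (w $ j) *\<^sub>R axis j \<i>)"
      using w by simp
    also have "\<dots> = (\<Sum>j\<in>UNIV. Re (w $ j) *\<^sub>R frechet_derivative f (at p) (axis j 1) + Im (w $ j) *\<^sub>R frechet_derivative f (at p) (axis j \<i>))"
      by (simp add: linear_sum[OF lin] linear_add[OF lin] linear_scale[OF lin])
    also have "\<dots> = (\<Sum>j\<in>UNIV. Lre j w * H j p + Lim j w * H' j p)"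
      unfolding Lre_def Lim_def H_def H'_def by (simp add: scaleR_conv_of_real)
    finally show ?thesis .
  qed
  have dbar: "cdiff f p (dzb k) = (- (\<i> / 2)) * (\<Sum>j\<in>UNIV. \<beta> k j p * H j p + \<gamma> k j p * H' j p)"
    if p: "p \<in> U" for p k
  proof -
    have lin: "linear (frechet_derivative f (at p))"
      using FD_works[OF smooth_diff_at[OF fs p]] has_derivative_linear by blast
    define D where "D = frechet_derivative f (at p)"
    define E where "E = J p (axis k 1) - axis k \<i>"
    have bE: "\<beta> k j p = Lre j E" "\<gamma> k j p = Lim j E" for j
      unfolding \<beta>_def \<gamma>_def Lre_def Lim_def E_def by simp_all
    have "(\<Sum>j\<in>UNIV. \<beta> k j p * H j p + \<gamma> k j p * H' j p) = D E"
      unfolding bE D_def decomp[OF p] ..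
    also have "D E = D (J p (axis k 1)) - D (axis k \<i>)"
      unfolding E_def D_def by (rule linear_diff[OF lin])
    also have "D (J p (axis k 1)) = \<i> * D (axis k 1)"
    proof -
      have "D (axis k 1) + \<i> * D (J p (axis k 1)) = 0" using hol[OF p] unfolding D_def by blast
      then have "\<i> * (D (axis k 1) + \<i> * D (J p (axis k 1))) = 0" by simp
      then show ?thesis by (simp add: algebra_simps)
    qed
    finally have S: "(\<Sum>j\<in>UNIV. \<beta> k j p * H j p + \<gamma> k j p * H' j p) = \<i> * D (axis k 1) - D (axis k \<i>)" .
    have "cdiff f p (dzb k) = (1/2) * D (axis k 1) + \<i> * ((1/2) * D (axis k \<i>))"
      unfolding cdiff_def dzb_def D_def using linear_scale[OF lin] by (simp add: scaleR_conv_of_real)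
    then show ?thesis unfolding S by (simp add: algebra_simps)
  qed
  have step: "Vc Aset x0 (Suc s) f" if s: "s \<le> m" and v: "Vc Aset x0 s f" for s
  proof (rule VcI)
    fix cs :: "((complex, 'n) vec \<times> (complex, 'n) vec) list"
    assume cs: "set cs \<subseteq> Aset" "length cs < Suc s"
    show "Dc cs f x0 = 0"
    proof (cases "length cs < s")
      case True then show ?thesis using VcD[OF v cs(1)] by blast
    next
      case False
      then have lcs: "length cs = s" using cs by simp
      show ?thesis
      proof (cases "set cs \<subseteq> range dz_vec")
        case True
        then obtain ks where ks: "cs = map dz_vec ks" using ex_map_conv[of cs dz_vec] by blast
        define \<alpha> where "\<alpha> k = count (mset ks) k" for k
        define sl where "sl = sorted_list_of_set (UNIV :: 'n set)"
        have sl: "distinct sl" "set sl = UNIV" unfolding sl_def by simp_all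
        define L where "L = concat (map (\<lambda>k. replicate (\<alpha> k) (dz_vec k)) sl)"
        have dm: "dz_multi \<alpha> f = Dc L f" unfolding dz_multi_def L_def sl_def by (rule foldr_dz)
        have mL: "mset L = mset cs"
          unfolding L_def \<alpha>_def ks using mset_concat_rep[OF sl(1), of "mset ks" dz_vec] sl(2) by simp
        have "length L = sum_list (map \<alpha> sl)" unfolding L_def by (simp add: length_concat o_def)
        also have "\<dots> = multi_deg \<alpha>" unfolding multi_deg_def using sum_list_distinct_conv_sum_set[OF sl(1), of \<alpha>] sl(2) by simp
        finally have "multi_deg \<alpha> = length cs" using mL by (metis size_mset)
        then have "dz_multi \<alpha> f x0 = 0" using assms(6) lcs s by simp
        then show ?thesis unfolding dm using Dc_perm[OF U fs mL x0] by simp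
      next
        case False
        then obtain c where c: "c \<in> set cs" "c \<notin> range dz_vec" by blast
        then obtain k where ck: "c = dzb k" using cs(1) unfolding Aset_def by blast
        obtain xs ys where cs2: "cs = xs @ c # ys" using c(1) by (meson split_list)
        obtain r where sr: "s = Suc r" using lcs cs2 by (cases s) auto
        have lr: "length (xs @ ys) < Suc r" using lcs cs2 sr by simp
        have sxy: "set (xs @ ys) \<subseteq> Aset" using cs(1) cs2 by auto
        have mm: "mset cs = mset ((xs @ ys) @ [dzb k])" unfolding cs2 ck by simp
        have vr: "Vc Aset x0 (Suc r) f" using v sr by simp
        have vH: "Vc Aset x0 r (H j)" "Vc Aset x0 r (H' j)" for j
          unfolding H_def H'_def using Vc_H[OF U x0 fs vr] by blast+
        have vt: "Vc Aset x0 (Suc r) (\<lambda>p. \<beta> k j p * H j p + \<gamma> k j p * H' j p)" for j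
          by (rule Vc_add[OF U x0 smooth_mult[OF U s\<beta> sH(1)] smooth_mult[OF U s\<gamma> sH(2)]
                Vc_mult0[OF U x0 s\<beta> sH(1) Aset_ne \<beta>0 vH(1)] Vc_mult0[OF U x0 s\<gamma> sH(2) Aset_ne \<gamma>0 vH(2)]])
        have st: "smooth_on U (\<lambda>p. \<beta> k j p * H j p + \<gamma> k j p * H' j p)" for j
          by (rule smooth_add[OF U smooth_mult[OF U s\<beta> sH(1)] smooth_mult[OF U s\<gamma> sH(2)]])
        have vs: "Vc Aset x0 (Suc r) (\<lambda>p. \<Sum>j\<in>UNIV. \<beta> k j p * H j p + \<gamma> k j p * H' j p)"
          by (rule Vc_sum[OF U x0]) (use vt st in auto)
        have ss: "smooth_on U (\<lambda>p. \<Sum>j\<in>UNIV. \<beta> k j p * H j p + \<gamma> k j p * H' j p)"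
          by (rule smooth_sum[OF U x0]) (use st in auto)
        have "Vc Aset x0 (Suc r) (\<lambda>p. (- (\<i> / 2)) * (\<Sum>j\<in>UNIV. \<beta> k j p * H j p + \<gamma> k j p * H' j p))"
          by (rule Vc_cmult[OF U x0 ss vs])
        then have vd: "Vc Aset x0 (Suc r) (\<lambda>p. cdiff f p (dzb k))"
          by (rule Vc_local[OF U x0, rotated]) (simp add: dbar)
        have "Dc cs f x0 = Dc ((xs @ ys) @ [dzb k]) f x0" by (rule Dc_perm[OF U fs mm x0])
        also have "\<dots> = Dc (xs @ ys) (\<lambda>p. cdiff f p (dzb k)) x0" by (simp add: Dc_append)
        also have "\<dots> = 0" by (rule VcD[OF vd sxy lr])
        finally show ?thesis .
      qed
    qed
  qed
  have allV: "s \<le> Suc m \<Longrightarrow> Vc Aset x0 s f" for s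
  proof (induction s)
    case 0 then show ?case unfolding Vc_def by simp
  next
    case (Suc s) then show ?case using step by simp
  qed
  have "vanishes_to_order f x0 (m + 1)"
    unfolding vanishes_to_order_def using Vc_Dl[OF U x0 fs allV[of "Suc m"]] by simp
  then show ?thesis unfolding ord_at_def by (intro SUP_upper) simp
qed

end
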